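(* Let $\kappa$ be a regular infinite cardinal and $\mu$ a singular cardinal with $\mathrm{cf}(\mu)=\kappa$. (1) If $\nu=\mu^{<\mu}$, then $\mathfrak q_\mu(\nu)\le\mathrm{cof}(\mathcal M_\kappa({}^{\mu}\mu,\mu))$. (2) If $\nu=\kappa^{<\mu}$, then $\mathfrak q_\mu(\nu)\le\mathrm{cof}(\mathcal M_\kappa({}^{\mu}2,\mu))$.
   Context: For ordinals $\delta,\rho$, ${}^{\delta}\rho$ is the set of functions $\delta\to\rho$; for a partial function $s\colon\delta\rightharpoonup\rho$, $[s]=\{f\in{}^{\delta}\rho: s\subseteq f\}$. The ${<}\mu$-box topology on ${}^{\delta}\rho$ has base $\{[s]: |\mathrm{dom}(s)|<\mu\}$; $(X,\mu)$ denotes $X$ with it. A set is $\kappa$-meagre if it is a union of at most $\kappa$ nowhere dense sets; $\mathcal M_\kappa(X,\tau)$ is the ideal of $\kappa$-meagre subsets; $\mathrm{cof}(\mathcal I)$ is the least size of $F\subseteq\mathcal I$ such that every $I\in\mathcal I$ is contained in some $J\in F$. For a cardinal $\nu$, $\mathfrak q_\mu(\nu)$ is the least size of a set $Q$ of functions $\nu\to[\mu]^{<\mu}$ such that for every function $g\colon\nu\to[\mu]^{<\mu}$ there is $f\in Q$ with $f(\gamma)\not\subseteq g(\gamma)$ for all $\gamma<\nu$. *)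

theory Defs
  imports "HOL-Analysis.Analysis"
begin

unbundle cardinal_syntax

text \<open>Cardinals are represented by cardinal well-orders (Card_order r); the ordinal
  underlying a cardinal r is Field r, ordered by r.\<close>

definition cf_is :: "'a rel \<Rightarrow> 'b rel \<Rightarrow> bool" where
  "cf_is r k \<longleftrightarrow>
     (\<exists>C. C \<subseteq> Field r \<and> cofinal C r \<and> (card_of C) =o k) \<and>
     (\<forall>C. C \<subseteq> Field r \<and> cofinal C r \<longrightarrow> k \<le>o (card_of C))"

text \<open>The set of all functions from an ordinal below the cardinal r into R, i.e.
  the union of the sets of functions alpha -> R for alpha < r; its size is R^(<r).\<close>
definition lt_pow :: "'a rel \<Rightarrow> 'c set \<Rightarrow> ('a \<Rightarrow> 'c) set" where
  "lt_pow r R = (\<Union>a\<in>Field r. underS r a \<rightarrow>\<^sub>E R)"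

definition cyl :: "'a set \<Rightarrow> 'c set \<Rightarrow> 'a set \<Rightarrow> ('a \<Rightarrow> 'c) \<Rightarrow> ('a \<Rightarrow> 'c) set" where
  "cyl M R A s = {f \<in> M \<rightarrow>\<^sub>E R. \<forall>x\<in>A. f x = s x}"

text \<open>The <mu-box topology on (Field r) -> R, where mu is the cardinal r.\<close>
definition box_top :: "'a rel \<Rightarrow> 'c set \<Rightarrow> ('a \<Rightarrow> 'c) topology" where
  "box_top r R = topology_generated_by
     {cyl (Field r) R A s | A s. A \<subseteq> Field r \<and> (card_of A) <o r \<and> s \<in> A \<rightarrow>\<^sub>E R}"

definition nowhere_dense_in :: "'x topology \<Rightarrow> 'x set \<Rightarrow> bool" where
  "nowhere_dense_in T N \<longleftrightarrow> N \<subseteq> topspace T \<and> T interior_of (T closure_of N) = {}"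

definition meagre_ideal :: "'b rel \<Rightarrow> 'x topology \<Rightarrow> 'x set set" where
  "meagre_ideal k T = {A. \<exists>F. (card_of F) \<le>o k \<and> (\<forall>N\<in>F. nowhere_dense_in T N) \<and> A = \<Union>F}"

definition cofinal_family :: "'x set set \<Rightarrow> 'x set set \<Rightarrow> bool" where
  "cofinal_family I F \<longleftrightarrow> F \<subseteq> I \<and> (\<forall>A\<in>I. \<exists>B\<in>F. A \<subseteq> B)"

definition small_subsets :: "'a rel \<Rightarrow> 'a set set" where
  "small_subsets r = {X. X \<subseteq> Field r \<and> (card_of X) <o r}"

definition q_family :: "'a rel \<Rightarrow> 'n set \<Rightarrow> ('n \<Rightarrow> 'a set) set \<Rightarrow> bool" where
  "q_family r N Q \<longleftrightarrow> Q \<subseteq> (N \<rightarrow>\<^sub>E small_subsets r) \<and>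
     (\<forall>g \<in> N \<rightarrow>\<^sub>E small_subsets r. \<exists>f\<in>Q. \<forall>\<gamma>\<in>N. \<not> f \<gamma> \<subseteq> g \<gamma>)"

text \<open>q_mu(nu) <= cof(I), unfolded: every cofinal family of I has size at least that
  of some q-witness family.\<close>
definition q_le_cof :: "'a rel \<Rightarrow> 'n set \<Rightarrow> 'x set set \<Rightarrow> bool" where
  "q_le_cof r N I \<longleftrightarrow>
     (\<forall>F. cofinal_family I F \<longrightarrow> (\<exists>Q. q_family r N Q \<and> (card_of Q) \<le>o (card_of F)))"

end

theory Submission
  imports Defs
begin

locale sing =
  fixes k :: "'b rel" and r :: "'a rel"
  assumes kc: "Card_order k" and kinf: "\<not> finite (Field k)"
    and rc: "Card_order r" and rinf: "\<not> finite (Field r)"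
    and kr: "k <o r" and cf: "cf_is r k"
begin

lemma rW: "Well_order r" using rc card_order_on_well_order_on by blast
lemma kW: "Well_order k" using kc card_order_on_well_order_on by blast

lemma fin_less: assumes "finite A" shows "|A| <o r"
proof -
  have "finite (Field |A| )" using assms by (simp add: Field_card_of)
  thus ?thesis using finite_ordLess_infinite[OF card_of_Well_order rW] rinf by blast
qed

lemma times_less:
  assumes "|A| <o r" "|B| <o r" shows "|A \<times> B| <o r"
proof (cases "finite A \<and> finite B")
  case True thus ?thesis by (intro fin_less) auto
next
  case False
  have WA: "Well_order |A|" "Well_order |B|" by (auto simp: card_of_Well_order)
  show ?thesis
  proof (cases "|B| \<le>o |A|")
    case True
    hence "\<not> finite A" using False card_of_ordLeq_finite by blast
    have "|A \<times> B| \<le>o |A \<times> A|" using True card_of_Times_mono2 by blast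
    moreover have "|A \<times> A| =o |A|" using \<open>\<not> finite A\<close> card_of_Times_same_infinite by blast
    ultimately have "|A \<times> B| \<le>o |A|" using ordLeq_ordIso_trans by blast
    thus ?thesis using assms ordLeq_ordLess_trans by blast
  next
    case False2: False
    hence "|A| \<le>o |B|" using ordLess_or_ordLeq[OF WA(2) WA(1)] ordLess_imp_ordLeq by blast
    hence "\<not> finite B" using False card_of_ordLeq_finite by blast
    have "|A \<times> B| \<le>o |B \<times> B|" using \<open>|A| \<le>o |B|\<close> card_of_Times_mono1 by blast
    moreover have "|B \<times> B| =o |B|" using \<open>\<not> finite B\<close> card_of_Times_same_infinite by blast
    ultimately have "|A \<times> B| \<le>o |B|" using ordLeq_ordIso_trans by blast
    thus ?thesis using assms ordLeq_ordLess_trans by blast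
  qed
qed

lemma un_less: "|A| <o r \<Longrightarrow> |B| <o r \<Longrightarrow> |A \<union> B| <o r"
  using card_of_Un_ordLess_infinite_Field rinf rc by blast

definition C :: "'a set" where
  "C = (SOME C. C \<subseteq> Field r \<and> cofinal C r \<and> |C| =o k)"

lemma C_props: "C \<subseteq> Field r" "cofinal C r" "|C| =o k"
proof -
  obtain C0 where "C0 \<subseteq> Field r \<and> cofinal C0 r \<and> |C0| =o k" using cf unfolding cf_is_def by blast
  hence "C \<subseteq> Field r \<and> cofinal C r \<and> |C| =o k" unfolding C_def by (rule someI)
  thus "C \<subseteq> Field r" "cofinal C r" "|C| =o k" by auto
qed

lemma C_less: "|C| <o r" using C_props(3) kr ordIso_ordLess_trans by blast

lemma C_above: "a \<in> Field r \<Longrightarrow> \<exists>c\<in>C. a \<in> underS r c"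
  using C_props(2) unfolding cofinal_def underS_def by blast

lemma lim:
  fixes A :: "'x set"
  assumes "|A| <o r" shows "\<exists>b\<in>Field r. |A| <o |underS r b|"
proof (rule ccontr)
  assume nt: "\<not> ?thesis"
  have le: "\<forall>b\<in>Field r. |underS r b| \<le>o |A|"
  proof
    fix b assume "b \<in> Field r"
    have "|A| <o |underS r b| \<or> |underS r b| \<le>o |A|"
      by (rule ordLess_or_ordLeq[OF card_of_Well_order card_of_Well_order])
    thus "|underS r b| \<le>o |A|" using nt \<open>b \<in> Field r\<close> by blast
  qed
  have "Field r \<subseteq> (\<Union>c\<in>C. underS r c)" using C_above by blast
  hence "|Field r| \<le>o |\<Union>c\<in>C. underS r c|" by (rule card_of_mono1)
  also have "|\<Union>c\<in>C. underS r c| \<le>o |SIGMA c:C. underS r c|" by (rule card_of_UNION_Sigma)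
  also have "|SIGMA c:C. underS r c| \<le>o |SIGMA c:C. A|"
    using le C_props(1) by (intro card_of_Sigma_mono1) blast
  also have "|SIGMA c:C. A| <o r" using times_less[OF C_less assms] by simp
  finally have "|Field r| <o r" .
  thus False using card_of_Field_ordIso[OF rc] not_ordLess_ordIso by blast
qed

lemma r_trans: "trans r" and r_antisym: "antisym r" and r_total: "Total r" and r_refl: "Refl r"
  using rW by (auto simp: well_order_on_def linear_order_on_def partial_order_on_def preorder_on_def)

lemma underS_mono: assumes "(b,a) \<in> r" shows "underS r b \<subseteq> underS r a"
proof
  fix x assume "x \<in> underS r b"
  hence x: "(x,b) \<in> r" "x \<noteq> b" by (auto simp: underS_def)
  have "(x,a) \<in> r" using x(1) assms r_trans unfolding trans_def by blast
  moreover have "x \<noteq> a"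
  proof
    assume "x = a"
    hence "(a,b) \<in> r" using x by simp
    hence "a = b" using assms r_antisym unfolding antisym_def by blast
    thus False using x \<open>x = a\<close> by simp
  qed
  ultimately show "x \<in> underS r a" by (simp add: underS_def)
qed

lemma underS_sub: "underS r a \<subseteq> Field r"
  by (auto simp: underS_def Field_def)

lemma underS_mono2: "b \<in> underS r a \<Longrightarrow> underS r b \<subseteq> underS r a"
  by (rule underS_mono) (simp add: underS_def)

lemma small_underS: "a \<in> Field r \<Longrightarrow> |underS r a| <o r"
  using card_of_underS[OF rc] by blast

lemma Fk_less: "|Field k| <o r"
  using card_of_Field_ordIso[OF kc] kr ordIso_ordLess_trans by blast

lemma UN_less:
  fixes I :: "'x set" and A :: "'x \<Rightarrow> 'y set"
  assumes I: "|I| <o k" and A: "\<forall>i\<in>I. |A i| <o r"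
  shows "|\<Union>i\<in>I. A i| <o r"
proof -
  have "\<forall>i\<in>I. \<exists>b. b \<in> Field r \<and> |A i| <o |underS r b|" using lim A by blast
  then obtain b where b: "\<forall>i\<in>I. b i \<in> Field r \<and> |A i| <o |underS r (b i)|" by metis
  have "|b ` I| \<le>o |I|" by (rule card_of_image)
  hence bI: "|b ` I| <o k" using I ordLeq_ordLess_trans by blast
  have "\<not> cofinal (b ` I) r"
  proof
    assume "cofinal (b ` I) r"
    moreover have "b ` I \<subseteq> Field r" using b by blast
    ultimately have "k \<le>o |b ` I|" using cf unfolding cf_is_def by blast
    thus False using bI not_ordLess_ordLeq by blast
  qed
  then obtain a where a: "a \<in> Field r" "\<forall>i\<in>I. \<not> (a \<noteq> b i \<and> (a, b i) \<in> r)"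
    unfolding cofinal_def by blast
  have le: "\<forall>i\<in>I. |A i| \<le>o |underS r a|"
  proof
    fix i assume i: "i \<in> I"
    have "(b i, a) \<in> r"
    proof (cases "a = b i")
      case True thus ?thesis using r_refl a(1) unfolding refl_on_def by simp
    next
      case False
      hence "(a, b i) \<notin> r" using a i by blast
      thus ?thesis using r_total a(1) b i False unfolding total_on_def by blast
    qed
    hence "|underS r (b i)| \<le>o |underS r a|" using underS_mono card_of_mono1 by blast
    thus "|A i| \<le>o |underS r a|" using b i ordLess_ordLeq_trans ordLess_imp_ordLeq by blast
  qed
  have "|\<Union>i\<in>I. A i| \<le>o |SIGMA i:I. A i|" by (rule card_of_UNION_Sigma)
  also have "|SIGMA i:I. A i| \<le>o |SIGMA i:I. underS r a|" using le by (rule card_of_Sigma_mono1)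
  also have "|SIGMA i:I. underS r a| <o r"
    using times_less[OF ordLess_transitive[OF I kr] small_underS[OF a(1)]] by simp
  finally show ?thesis .
qed

end
locale singR = sing k r for k :: "'b rel" and r :: "'a rel" +
  fixes R :: "'c set" and r0 r1 :: 'c
  assumes r0R: "r0 \<in> R" and r1R: "r1 \<in> R" and r01: "r0 \<noteq> r1"
begin

definition space :: "('a \<Rightarrow> 'c) set" where "space = Field r \<rightarrow>\<^sub>E R"
definition small :: "'a set \<Rightarrow> bool" where "small A \<longleftrightarrow> A \<subseteq> Field r \<and> |A| <o r"
abbreviation cy :: "'a set \<Rightarrow> ('a \<Rightarrow> 'c) \<Rightarrow> ('a \<Rightarrow> 'c) set" where "cy A s \<equiv> cyl (Field r) R A s"
definition SB :: "('a \<Rightarrow> 'c) set set" where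
  "SB = {cyl (Field r) R A s | A s. A \<subseteq> Field r \<and> (card_of A) <o r \<and> s \<in> A \<rightarrow>\<^sub>E R}"
abbreviation T where "T \<equiv> box_top r R"

lemma T_def': "T = topology_generated_by SB" by (simp add: box_top_def SB_def)

lemma cy_space: "cy A s \<subseteq> space" by (auto simp: cyl_def space_def)

lemma small_Un: "small A \<Longrightarrow> small B \<Longrightarrow> small (A \<union> B)"
  using un_less by (auto simp: small_def)

lemma small_sub: "small B \<Longrightarrow> A \<subseteq> B \<Longrightarrow> small A"
  unfolding small_def using card_of_mono1 ordLeq_ordLess_trans by blast

lemma small_underS': "a \<in> Field r \<Longrightarrow> small (underS r a)"
  using small_underS underS_sub by (simp add: small_def)

lemma small_empty: "small {}" using fin_less[of "{}"] by (simp add: small_def)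

lemma topspace_T: "topspace T = space"
proof -
  have "cy {} (\<lambda>_. undefined) = space" by (auto simp: cyl_def space_def)
  moreover have "cy {} (\<lambda>_. undefined) \<in> SB" unfolding SB_def using fin_less[of "{}"] by force
  ultimately have "space \<subseteq> \<Union>SB" by auto
  moreover have "\<Union>SB \<subseteq> space" unfolding SB_def using cy_space by blast
  ultimately show ?thesis by (simp add: T_def')
qed

lemma cy_open: assumes "small A" "\<forall>\<delta>\<in>A. s \<delta> \<in> R" shows "openin T (cy A s)"
proof -
  have "cy A s = cy A (restrict s A)" by (auto simp: cyl_def)
  moreover have "restrict s A \<in> A \<rightarrow>\<^sub>E R" using assms by auto
  ultimately have "cy A s \<in> SB" using assms unfolding SB_def small_def by blast
  thus ?thesis unfolding T_def' openin_topology_generated_by_iff by (rule generate_topology_on.Basis)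
qed

lemma base_gen: "generate_topology_on SB U \<Longrightarrow> y \<in> U \<Longrightarrow> \<exists>A. small A \<and> cy A y \<subseteq> U"
proof (induction rule: generate_topology_on.induct)
  case Empty thus ?case by simp
next
  case (Int a b)
  then obtain A1 A2 where "small A1" "cy A1 y \<subseteq> a" "small A2" "cy A2 y \<subseteq> b" by auto
  moreover have "cy (A1 \<union> A2) y \<subseteq> cy A1 y \<inter> cy A2 y" by (auto simp: cyl_def)
  ultimately show ?case using small_Un by blast
next
  case (UN K)
  then obtain k0 where "k0 \<in> K" "y \<in> k0" by auto
  then obtain A where "small A" "cy A y \<subseteq> k0" using UN.IH by blast
  thus ?case using \<open>k0 \<in> K\<close> by blast
next
  case (Basis s)
  then obtain A s0 where s: "s = cy A s0" "A \<subseteq> Field r" "|A| <o r" unfolding SB_def by blast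
  have "cy A y = cy A s0" using Basis(2) s(1) by (auto simp: cyl_def)
  thus ?case using s by (auto simp: small_def)
qed

lemma base: "openin T U \<Longrightarrow> y \<in> U \<Longrightarrow> \<exists>A. small A \<and> cy A y \<subseteq> U"
  using base_gen unfolding T_def' openin_topology_generated_by_iff by blast

definition wit :: "'a set \<Rightarrow> ('a \<Rightarrow> 'c) \<Rightarrow> 'a \<Rightarrow> 'c" where
  "wit A z = (\<lambda>\<delta>. if \<delta> \<in> A then z \<delta> else if \<delta> \<in> Field r then r0 else undefined)"

lemma wit_in: assumes "A \<subseteq> Field r" "\<forall>\<delta>\<in>A. z \<delta> \<in> R" shows "wit A z \<in> cy A z"
  using assms r0R by (auto simp: wit_def cyl_def)

lemma nd_crit:
  assumes NS: "N \<subseteq> space"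
    and H: "\<And>A y. small A \<Longrightarrow> y \<in> space \<Longrightarrow> \<exists>A' z. small A' \<and> A \<subseteq> A' \<and> (\<forall>\<delta>\<in>A'. z \<delta> \<in> R)
              \<and> (\<forall>\<delta>\<in>A. z \<delta> = y \<delta>) \<and> cy A' z \<inter> N = {}"
  shows "nowhere_dense_in T N"
proof -
  let ?U = "T interior_of (T closure_of N)"
  have "?U = {}"
  proof (rule ccontr)
    assume "?U \<noteq> {}"
    then obtain y where y: "y \<in> ?U" by blast
    have oU: "openin T ?U" by simp
    obtain A where A: "small A" "cy A y \<subseteq> ?U" using base[OF oU y] by blast
    have ysp: "y \<in> space" using y openin_subset[OF oU] topspace_T by blast
    obtain A' z where Z: "small A'" "A \<subseteq> A'" "\<forall>\<delta>\<in>A'. z \<delta> \<in> R" "\<forall>\<delta>\<in>A. z \<delta> = y \<delta>"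
      "cy A' z \<inter> N = {}" using H[OF A(1) ysp] by blast
    have "cy A' z \<subseteq> cy A y" using Z by (auto simp: cyl_def)
    also have "\<dots> \<subseteq> T closure_of N" using A(2) interior_of_subset[of T "T closure_of N"] by (rule order_trans)
    finally have sub: "cy A' z \<subseteq> T closure_of N" .
    have oW: "openin T (cy A' z)" using cy_open Z(1,3) by blast
    have "cy A' z \<inter> T closure_of N = {}" using openin_Int_closure_of_eq_empty[OF oW] Z(5) by blast
    moreover have "wit A' z \<in> cy A' z" using wit_in Z(1,3) by (auto simp: small_def)
    ultimately show False using sub by blast
  qed
  thus ?thesis using NS topspace_T by (simp add: nowhere_dense_in_def)
qed

lemma ext_nd:
  assumes nd: "nowhere_dense_in T N" and A: "small A" "\<forall>\<delta>\<in>A. s \<delta> \<in> R"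
  shows "\<exists>A' s'. small A' \<and> A \<subseteq> A' \<and> (\<forall>\<delta>\<in>A'. s' \<delta> \<in> R) \<and> (\<forall>\<delta>\<in>A. s' \<delta> = s \<delta>) \<and> cy A' s' \<inter> N = {}"
proof -
  have NS: "N \<subseteq> topspace T" and E: "T interior_of (T closure_of N) = {}"
    using nd by (auto simp: nowhere_dense_in_def)
  have oV: "openin T (cy A s)" using cy_open A by blast
  have ne: "wit A s \<in> cy A s" using wit_in A by (auto simp: small_def)
  have "\<not> cy A s \<subseteq> T closure_of N"
  proof
    assume "cy A s \<subseteq> T closure_of N"
    hence "cy A s \<subseteq> T interior_of (T closure_of N)" using oV interior_of_maximal by blast
    thus False using E ne by blast
  qed
  then obtain y where y: "y \<in> cy A s" "y \<notin> T closure_of N" by blast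
  have oO: "openin T (topspace T - T closure_of N)" by (simp add: openin_diff closedin_closure_of)
  have yO: "y \<in> cy A s \<inter> (topspace T - T closure_of N)" using y cy_space topspace_T by blast
  obtain A2 where A2: "small A2" "cy A2 y \<subseteq> cy A s \<inter> (topspace T - T closure_of N)"
    using base[OF openin_Int[OF oV oO] yO] by blast
  have ysp: "y \<in> space" using y cy_space by blast
  have "cy (A \<union> A2) y \<subseteq> cy A2 y" by (auto simp: cyl_def)
  hence "cy (A \<union> A2) y \<inter> N = {}" using A2(2) closure_of_subset[OF NS] by blast
  moreover have "\<forall>\<delta>\<in>A \<union> A2. y \<delta> \<in> R" using ysp A(1) A2(1) by (auto simp: space_def small_def)
  moreover have "\<forall>\<delta>\<in>A. y \<delta> = s \<delta>" using y(1) by (auto simp: cyl_def)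
  ultimately show ?thesis using small_Un[OF A(1) A2(1)] by blast
qed

definition cond :: "'a set \<times> ('a \<Rightarrow> 'c) \<Rightarrow> bool" where
  "cond p \<longleftrightarrow> small (fst p) \<and> (\<forall>\<delta>\<in>fst p. snd p \<delta> \<in> R)"
definition ext :: "'a set \<times> ('a \<Rightarrow> 'c) \<Rightarrow> 'a set \<times> ('a \<Rightarrow> 'c) \<Rightarrow> bool" where
  "ext p q \<longleftrightarrow> fst p \<subseteq> fst q \<and> (\<forall>\<delta>\<in>fst p. snd q \<delta> = snd p \<delta>)"
definition EXT :: "('a \<Rightarrow> 'c) set \<Rightarrow> 'a set \<times> ('a \<Rightarrow> 'c) \<Rightarrow> 'a set \<times> ('a \<Rightarrow> 'c)" where
  "EXT N p = (SOME q. cond q \<and> ext p q \<and> cy (fst q) (snd q) \<inter> N = {})"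
definition join :: "('a set \<times> ('a \<Rightarrow> 'c)) set \<Rightarrow> 'a set \<times> ('a \<Rightarrow> 'c)" where
  "join X = (\<Union>(fst ` X), \<lambda>\<delta>. snd (SOME p. p \<in> X \<and> \<delta> \<in> fst p) \<delta>)"

lemma ext_trans: "ext p q \<Longrightarrow> ext q s \<Longrightarrow> ext p s"
  by (auto simp: ext_def)

lemma EXT: assumes "nowhere_dense_in T N" "cond p"
  shows "cond (EXT N p) \<and> ext p (EXT N p) \<and> cy (fst (EXT N p)) (snd (EXT N p)) \<inter> N = {}"
proof -
  obtain A' s' where "small A'" "fst p \<subseteq> A'" "\<forall>\<delta>\<in>A'. s' \<delta> \<in> R" "\<forall>\<delta>\<in>fst p. s' \<delta> = snd p \<delta>"
     "cy A' s' \<inter> N = {}"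
    using ext_nd[OF assms(1), of "fst p" "snd p"] assms(2) unfolding cond_def by blast
  hence "cond (A',s') \<and> ext p (A',s') \<and> cy (fst (A',s')) (snd (A',s')) \<inter> N = {}"
    by (simp add: cond_def ext_def)
  thus ?thesis unfolding EXT_def by (rule someI)
qed

lemma join:
  assumes c: "\<forall>p\<in>X. cond p" and comp: "\<forall>p\<in>X. \<forall>q\<in>X. \<forall>\<delta>\<in>fst p \<inter> fst q. snd p \<delta> = snd q \<delta>"
    and sm: "small (\<Union>(fst ` X))"
  shows "cond (join X) \<and> (\<forall>p\<in>X. ext p (join X))"
proof -
  have val: "snd (join X) \<delta> = snd p \<delta>" if "p \<in> X" "\<delta> \<in> fst p" for p \<delta>
  proof -
    have ex: "\<exists>q. q \<in> X \<and> \<delta> \<in> fst q" using that by blast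
    let ?q = "SOME q. q \<in> X \<and> \<delta> \<in> fst q"
    have "?q \<in> X \<and> \<delta> \<in> fst ?q" using someI_ex[OF ex] .
    hence "snd ?q \<delta> = snd p \<delta>" using comp that by blast
    thus ?thesis by (simp add: join_def)
  qed
  have "\<forall>\<delta>\<in>fst (join X). snd (join X) \<delta> \<in> R"
  proof
    fix \<delta> assume "\<delta> \<in> fst (join X)"
    then obtain p where "p \<in> X" "\<delta> \<in> fst p" by (auto simp: join_def)
    thus "snd (join X) \<delta> \<in> R" using val c unfolding cond_def by auto
  qed
  moreover have "fst (join X) = \<Union>(fst ` X)" by (simp add: join_def)
  ultimately have "cond (join X)" using sm by (simp add: cond_def)
  moreover have "\<forall>p\<in>X. ext p (join X)" using val by (auto simp: ext_def join_def)
  ultimately show ?thesis by blast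
qed

lemma kwo: "wo_rel k" using kW by (simp add: wo_rel_def)

lemma k_cases: "i \<in> Field k \<Longrightarrow> j \<in> Field k \<Longrightarrow> i = j \<or> i \<in> underS k j \<or> j \<in> underS k i"
proof -
  assume "i \<in> Field k" "j \<in> Field k"
  moreover have "Total k" using kW by (simp add: well_order_on_def linear_order_on_def)
  ultimately show ?thesis unfolding total_on_def underS_def by blast
qed

lemma nd_empty: "nowhere_dense_in T {}"
  by (simp add: nowhere_dense_in_def)

lemma baire:
  assumes B: "B \<in> meagre_ideal k T" and c0: "cond (A0, s0)"
  shows "\<exists>x\<in>cy A0 s0. x \<notin> B"
proof -
  obtain F where F: "|F| \<le>o k" "\<forall>N\<in>F. nowhere_dense_in T N" "B = \<Union>F"
    using B unfolding meagre_ideal_def mem_Collect_eq by (elim exE conjE) blast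
  have "|F| \<le>o |Field k|"
    by (rule ordLeq_ordIso_trans[OF F(1) ordIso_symmetric[OF card_of_Field_ordIso[OF kc]]])
  hence "\<exists>e. inj_on e F \<and> e ` F \<subseteq> Field k" by (simp only: card_of_ordLeq[symmetric])
  then obtain e where e: "inj_on e F" "e ` F \<subseteq> Field k" by blast
  define Nn where "Nn i = (if i \<in> e ` F then inv_into F e i else {})" for i
  have ndN: "nowhere_dense_in T (Nn i)" for i
  proof (cases "i \<in> e ` F")
    case True
    hence "inv_into F e i \<in> F" by (rule inv_into_into)
    thus ?thesis using F(2) True by (simp add: Nn_def)
  next
    case False thus ?thesis using nd_empty by (simp add: Nn_def)
  qed
  define H where "H = (\<lambda>t i. EXT (Nn i) (join (insert (A0,s0) (t ` underS k i))))"
  have adm: "wo_rel.adm_wo k H"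
    unfolding wo_rel.adm_wo_def[OF kwo]
  proof (intro allI impI)
    fix f g :: "'b \<Rightarrow> 'a set \<times> ('a \<Rightarrow> 'c)" and i
    assume "\<forall>y\<in>underS k i. f y = g y"
    hence "f ` underS k i = g ` underS k i" by (intro image_cong) auto
    thus "H f i = H g i" by (simp add: H_def)
  qed
  define t where "t = wo_rel.worec k H"
  have fx0: "t = H t" unfolding t_def by (rule wo_rel.worec_fixpoint[OF kwo adm])
  have fx: "t i = H t i" for i by (rule fun_cong[OF fx0])
  define P where "P i \<longleftrightarrow> (i \<in> Field k \<longrightarrow> cond (t i) \<and> ext (A0,s0) (t i) \<and>
      (\<forall>j\<in>underS k i. ext (t j) (t i)) \<and> cy (fst (t i)) (snd (t i)) \<inter> Nn i = {})" for i
  have PP: "P i" for i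
  proof (induction i rule: wo_rel.well_order_induct[OF kwo])
    case (1 i)
    show ?case unfolding P_def
    proof
      assume iF: "i \<in> Field k"
      have IH: "cond (t j) \<and> ext (A0,s0) (t j) \<and> (\<forall>j'\<in>underS k j. ext (t j') (t j))"
        if "j \<in> underS k i" for j
      proof -
        have "j \<noteq> i \<and> (j,i) \<in> k" "j \<in> Field k" using that by (auto simp: underS_def Field_def)
        thus ?thesis using 1 unfolding P_def by blast
      qed
      let ?X = "insert (A0,s0) (t ` underS k i)"
      have cX: "\<forall>p\<in>?X. cond p" using c0 IH by blast
      have agree: "\<forall>\<delta>\<in>fst (t j) \<inter> fst (t j'). snd (t j) \<delta> = snd (t j') \<delta>"
        if "j \<in> underS k i" "j' \<in> underS k i" for j j'
      proof -
        have "j \<in> Field k" "j' \<in> Field k" using that by (auto simp: underS_def Field_def)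
        hence "j = j' \<or> j \<in> underS k j' \<or> j' \<in> underS k j" using k_cases by blast
        thus ?thesis using IH that unfolding ext_def by (metis IntD1 IntD2)
      qed
      have comp: "\<forall>p\<in>?X. \<forall>q\<in>?X. \<forall>\<delta>\<in>fst p \<inter> fst q. snd p \<delta> = snd q \<delta>"
      proof (intro ballI)
        fix p q \<delta> assume p: "p \<in> ?X" and q: "q \<in> ?X" and d: "\<delta> \<in> fst p \<inter> fst q"
        show "snd p \<delta> = snd q \<delta>"
        proof (cases "p = (A0,s0)")
          case True
          show ?thesis
          proof (cases "q = (A0,s0)")
            case True thus ?thesis using \<open>p = (A0,s0)\<close> by simp
          next
            case False
            then obtain j' where "j' \<in> underS k i" "q = t j'" using q by blast
            thus ?thesis using IH True d unfolding ext_def by auto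
          qed
        next
          case False
          then obtain j where j: "j \<in> underS k i" "p = t j" using p by blast
          show ?thesis
          proof (cases "q = (A0,s0)")
            case True thus ?thesis using IH j d unfolding ext_def by auto
          next
            case False
            then obtain j' where "j' \<in> underS k i" "q = t j'" using q by blast
            thus ?thesis using agree j d by blast
          qed
        qed
      qed
      have "\<Union>(fst ` ?X) = A0 \<union> (\<Union>j\<in>underS k i. fst (t j))" by auto
      moreover have "small (\<Union>j\<in>underS k i. fst (t j))"
      proof -
        have "|\<Union>j\<in>underS k i. fst (t j)| <o r"
          using IH unfolding cond_def small_def by (intro UN_less[OF card_of_underS[OF kc iF]]) blast
        moreover have "(\<Union>j\<in>underS k i. fst (t j)) \<subseteq> Field r" using IH unfolding cond_def small_def by blast
        ultimately show ?thesis by (simp add: small_def)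
      qed
      ultimately have smX: "small (\<Union>(fst ` ?X))" using small_Un c0 unfolding cond_def by auto
      have J: "cond (join ?X) \<and> (\<forall>p\<in>?X. ext p (join ?X))" using join[OF cX comp smX] .
      have ti: "t i = EXT (Nn i) (join ?X)" using fx[of i] by (simp add: H_def)
      have E: "cond (t i) \<and> ext (join ?X) (t i) \<and> cy (fst (t i)) (snd (t i)) \<inter> Nn i = {}"
        using EXT[OF ndN J[THEN conjunct1]] ti by simp
      show "cond (t i) \<and> ext (A0,s0) (t i) \<and> (\<forall>j\<in>underS k i. ext (t j) (t i)) \<and>
          cy (fst (t i)) (snd (t i)) \<inter> Nn i = {}"
        using E J ext_trans by blast
    qed
  qed
  have tprop: "cond (t i) \<and> ext (A0,s0) (t i) \<and> (\<forall>j\<in>underS k i. ext (t j) (t i)) \<and>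
      cy (fst (t i)) (snd (t i)) \<inter> Nn i = {}" if "i \<in> Field k" for i
    using PP[of i] that unfolding P_def by blast
  define x where "x = (\<lambda>\<delta>. if \<delta> \<in> Field r then (if \<exists>i\<in>Field k. \<delta> \<in> fst (t i)
      then snd (t (SOME i. i \<in> Field k \<and> \<delta> \<in> fst (t i))) \<delta> else r0) else undefined)"
  have xin: "x \<in> cy (fst (t i)) (snd (t i))" if iF: "i \<in> Field k" for i
  proof -
    have "x \<delta> \<in> R" if "\<delta> \<in> Field r" for \<delta>
    proof (cases "\<exists>i\<in>Field k. \<delta> \<in> fst (t i)")
      case True
      let ?i = "SOME i. i \<in> Field k \<and> \<delta> \<in> fst (t i)"
      have "?i \<in> Field k \<and> \<delta> \<in> fst (t ?i)" using someI_ex[of "\<lambda>i. i \<in> Field k \<and> \<delta> \<in> fst (t i)"] True by blast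
      thus ?thesis using tprop[of ?i] True that unfolding x_def cond_def by simp
    next
      case False thus ?thesis using that r0R unfolding x_def by simp
    qed
    hence "x \<in> space" unfolding space_def by (auto simp: x_def)
    moreover have "x \<delta> = snd (t i) \<delta>" if d: "\<delta> \<in> fst (t i)" for \<delta>
    proof -
      have dr: "\<delta> \<in> Field r" using tprop[OF iF] d unfolding cond_def small_def by blast
      have ex: "\<exists>i\<in>Field k. \<delta> \<in> fst (t i)" using iF d by blast
      let ?i = "SOME i. i \<in> Field k \<and> \<delta> \<in> fst (t i)"
      have i': "?i \<in> Field k \<and> \<delta> \<in> fst (t ?i)" using someI_ex[of "\<lambda>i. i \<in> Field k \<and> \<delta> \<in> fst (t i)"] ex by blast
      have "x \<delta> = snd (t ?i) \<delta>" unfolding x_def using dr ex by simp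
      moreover have "snd (t ?i) \<delta> = snd (t i) \<delta>"
      proof -
        have "i = ?i \<or> i \<in> underS k ?i \<or> ?i \<in> underS k i" using k_cases iF i' by blast
        moreover
        { assume "i \<in> underS k ?i"
          hence "ext (t i) (t ?i)" using tprop[of ?i] i' by blast
          hence ?thesis using d unfolding ext_def by auto }
        moreover
        { assume "?i \<in> underS k i"
          hence "ext (t ?i) (t i)" using tprop[OF iF] by blast
          hence ?thesis using i' unfolding ext_def by auto }
        ultimately show ?thesis by fastforce
      qed
      ultimately show ?thesis by simp
    qed
    ultimately show ?thesis unfolding cyl_def space_def by blast
  qed
  have "Field k \<noteq> {}" using kinf by auto
  then obtain i0 where i0: "i0 \<in> Field k" by blast
  have "x \<in> cy A0 s0"
  proof -
    have "ext (A0,s0) (t i0)" using tprop[OF i0] by blast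
    thus ?thesis using xin[OF i0] unfolding cyl_def ext_def by auto
  qed
  moreover have "x \<notin> B"
  proof
    assume "x \<in> B"
    then obtain N where N: "N \<in> F" "x \<in> N" using F(3) by blast
    have "Nn (e N) = N" using N(1) e(1) by (simp add: Nn_def)
    have eN: "e N \<in> Field k" using e(2) N(1) by blast
    have "x \<in> cy (fst (t (e N))) (snd (t (e N)))" using xin[OF eN] .
    moreover have "cy (fst (t (e N))) (snd (t (e N))) \<inter> Nn (e N) = {}"
      using tprop[OF eN] by blast
    ultimately show False using N(2) \<open>Nn (e N) = N\<close> by blast
  qed
  ultimately show ?thesis by blast
qed

abbreviation Fr4 where "Fr4 \<equiv> Field r \<times> Field r \<times> Field r \<times> Field r"

lemma Fr4_le: "|Fr4| \<le>o |Field r|"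
proof -
  have sq: "|Field r \<times> Field r| =o |Field r|" using card_of_Times_same_infinite rinf by blast
  have "|Field r \<times> Field r \<times> Field r| \<le>o |Field r \<times> Field r|"
    by (rule card_of_Times_mono2[OF ordIso_imp_ordLeq[OF sq]])
  hence c3: "|Field r \<times> Field r \<times> Field r| \<le>o |Field r|" using sq ordLeq_ordIso_trans by blast
  have "|Fr4| \<le>o |Field r \<times> Field r|" by (rule card_of_Times_mono2[OF c3])
  thus ?thesis using sq ordLeq_ordIso_trans by blast
qed

definition hh :: "'a \<times> 'a \<times> 'a \<times> 'a \<Rightarrow> 'a" where
  "hh = (SOME h. inj_on h Fr4 \<and> h ` Fr4 \<subseteq> Field r)"

lemma hh: "inj_on hh Fr4" "hh ` Fr4 \<subseteq> Field r"
proof -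
  have "\<exists>h. inj_on h Fr4 \<and> h ` Fr4 \<subseteq> Field r" using Fr4_le by (simp only: card_of_ordLeq[symmetric])
  hence "inj_on hh Fr4 \<and> hh ` Fr4 \<subseteq> Field r" unfolding hh_def by (rule someI_ex)
  thus "inj_on hh Fr4" "hh ` Fr4 \<subseteq> Field r" by auto
qed

definition pat :: "'a \<Rightarrow> 'a \<Rightarrow> 'c" where "pat v u = (if u = v then r1 else r0)"

definition cosmall :: "('a \<Rightarrow> 'c) \<Rightarrow> 'a \<Rightarrow> 'a \<Rightarrow> 'a \<Rightarrow> bool" where
  "cosmall x \<beta> c v \<longleftrightarrow> v \<in> underS r c \<and> \<not> finite (underS r c) \<and>
     |{p \<in> underS r c \<times> underS r c. x (hh (\<beta>, c, p)) \<noteq> pat v (fst p)}| <o |underS r c|"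

lemma cosmall_unique: assumes "cosmall x \<beta> c v" "cosmall x \<beta> c w" shows "v = w"
proof (rule ccontr)
  assume vw: "v \<noteq> w"
  let ?U = "underS r c"
  let ?E = "\<lambda>v. {p \<in> ?U \<times> ?U. x (hh (\<beta>, c, p)) \<noteq> pat v (fst p)}"
  have inf: "\<not> finite ?U" and Ev: "|?E v| <o |?U|" and Ew: "|?E w| <o |?U|" and vU: "v \<in> ?U"
    using assms unfolding cosmall_def by auto
  have "(\<lambda>z. (v,z)) ` ?U \<subseteq> ?E v \<union> ?E w"
  proof
    fix p assume "p \<in> (\<lambda>z. (v,z)) ` ?U"
    then obtain z where z: "z \<in> ?U" "p = (v,z)" by blast
    have "pat v (fst p) = r1" "pat w (fst p) = r0" using z vw by (auto simp: pat_def)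
    thus "p \<in> ?E v \<union> ?E w" using z vU r01 by auto
  qed
  hence "|(\<lambda>z. (v,z)) ` ?U| \<le>o |?E v \<union> ?E w|" by (rule card_of_mono1)
  moreover have "|(\<lambda>z. (v,z)) ` ?U| =o |?U|"
  proof -
    have "bij_betw (\<lambda>z. (v,z)) ?U ((\<lambda>z. (v,z)) ` ?U)" by (auto simp: bij_betw_def inj_on_def)
    thus ?thesis using card_of_ordIsoI ordIso_symmetric by blast
  qed
  moreover have "|?E v \<union> ?E w| <o |?U|" by (rule card_of_Un_ordLess_infinite[OF inf Ev Ew])
  ultimately show False
    by (meson not_ordLess_ordLeq ordIso_ordLeq_trans ordIso_symmetric)
qed

end
locale decs = singR k r R r0 r1 for k :: "'b rel" and r :: "'a rel" and R :: "'c set" and r0 r1 +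
  fixes N :: "'n set" and Phi :: "'n \<Rightarrow> 'w" and dec :: "'a \<Rightarrow> ('a \<Rightarrow> 'c) \<Rightarrow> 'w"
    and Dom :: "'a \<Rightarrow> 'a set"
  assumes Phi_inj: "inj_on Phi N"
    and Dsm: "\<And>c. c \<in> Field r \<Longrightarrow> small (\<Union>\<beta>\<in>underS r c. Dom \<beta>)"
    and dloc: "\<And>\<beta> x y. x \<in> space \<Longrightarrow> y \<in> space \<Longrightarrow> (\<forall>\<delta>\<in>Dom \<beta>. x \<delta> = y \<delta>) \<Longrightarrow> dec \<beta> x = dec \<beta> y"
    and dreal: "\<And>n. n \<in> N \<Longrightarrow> \<exists>a\<in>Field r. \<exists>A s. small A \<and> (\<forall>\<delta>\<in>A. s \<delta> \<in> R) \<and> (\<forall>x\<in>cy A s. dec a x = Phi n)"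
begin

definition G :: "('n \<Rightarrow> 'a set) \<Rightarrow> 'w \<Rightarrow> 'a set" where
  "G g \<gamma> = (if \<gamma> \<in> Phi ` N then g (inv_into N Phi \<gamma>) else {})"

definition NN :: "('n \<Rightarrow> 'a set) \<Rightarrow> 'a \<Rightarrow> 'a \<Rightarrow> ('a \<Rightarrow> 'c) set" where
  "NN g c d = {x \<in> space. \<exists>\<beta>\<in>underS r c. |G g (dec \<beta> x)| \<le>o |underS r d| \<and>
      (\<forall>c'\<in>C. \<forall>v. cosmall x \<beta> c' v \<longrightarrow> v \<in> G g (dec \<beta> x))}"


lemma NN_nd: assumes cC: "c \<in> C" and dC: "d \<in> C" shows "nowhere_dense_in T (NN g c d)"
proof (rule nd_crit)
  show "NN g c d \<subseteq> space" by (auto simp: NN_def)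
next
  fix A y assume A: "small A" and y: "y \<in> space"
  have cF: "c \<in> Field r" and dF: "d \<in> Field r" using cC dC C_props(1) by auto
  define P where "P = (\<Union>\<beta>\<in>underS r c. Dom \<beta>)"
  have Psm: "small P" unfolding P_def using Dsm[OF cF] .
  define L where "L = A \<union> P \<union> underS r d"
  have Lsm: "small L" unfolding L_def using small_Un[OF small_Un[OF A Psm] small_underS'[OF dF]] .
  have "|L <+> Field k| <o r"
    using card_of_Plus_ordLess_infinite_Field[OF rinf rc] Lsm Fk_less by (auto simp: small_def)
  then obtain b where b: "b \<in> Field r" "|L <+> Field k| <o |underS r b|" using lim by blast
  obtain c' where c': "c' \<in> C" "b \<in> underS r c'" using C_above[OF b(1)] by blast
  have c'F: "c' \<in> Field r" using c'(1) C_props(1) by auto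
  have bc: "|underS r b| \<le>o |underS r c'|" using underS_mono2[OF c'(2)] by (rule card_of_mono1)
  have Lk: "|L <+> Field k| <o |underS r c'|" using b(2) bc by (rule ordLess_ordLeq_trans)
  have Lc: "|L| <o |underS r c'|" using card_of_Plus1 Lk by (rule ordLeq_ordLess_trans)
  have Kc: "|Field k| \<le>o |underS r c'|" using card_of_Plus2 Lk ordLeq_ordLess_trans ordLess_imp_ordLeq by blast
  have infc: "\<not> finite (underS r c')"
    using Kc card_of_ordLeq_finite kinf by blast
  have dc: "|underS r d| <o |underS r c'|"
  proof -
    have "|underS r d| \<le>o |L|" by (rule card_of_mono1) (auto simp: L_def)
    thus ?thesis using Lc by (rule ordLeq_ordLess_trans)
  qed
  define e where "e \<beta> = (SOME v. v \<in> underS r c' \<and> v \<notin> G g (dec \<beta> y))" for \<beta>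
  have e: "e \<beta> \<in> underS r c' \<and> e \<beta> \<notin> G g (dec \<beta> y)" if "|G g (dec \<beta> y)| \<le>o |underS r d|" for \<beta>
  proof -
    have "\<exists>v. v \<in> underS r c' \<and> v \<notin> G g (dec \<beta> y)"
    proof (rule ccontr)
      assume "\<not> ?thesis"
      hence "underS r c' \<subseteq> G g (dec \<beta> y)" by blast
      hence "|underS r c'| \<le>o |G g (dec \<beta> y)|" by (rule card_of_mono1)
      hence "|underS r c'| \<le>o |underS r d|" using that by (rule ordLeq_transitive)
      thus False using dc not_ordLess_ordLeq by blast
    qed
    thus ?thesis unfolding e_def by (rule someI_ex)
  qed
  define X where "X = underS r c \<times> ({c'} \<times> (underS r c' \<times> underS r c'))"
  have XF: "X \<subseteq> Fr4" unfolding X_def using underS_sub c'F by auto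
  define E where "E = hh ` X"
  have EF: "E \<subseteq> Field r" unfolding E_def using XF hh(2) by blast
  have Esm: "small E"
  proof -
    have "|X| <o r" unfolding X_def
      using times_less[OF small_underS[OF cF] times_less[OF fin_less[of "{c'}"] times_less[OF small_underS[OF c'F] small_underS[OF c'F]]]]
      by simp
    hence "|E| <o r" unfolding E_def using card_of_image ordLeq_ordLess_trans by blast
    thus ?thesis using EF by (simp add: small_def)
  qed
  define HI where "HI = inv_into Fr4 hh"
  define z where "z \<delta> = (if \<delta> \<in> E - L then pat (e (fst (HI \<delta>))) (fst (snd (snd (HI \<delta>)))) else y \<delta>)" for \<delta>
  define A' where "A' = L \<union> E"
  have A'sm: "small A'" unfolding A'_def using small_Un[OF Lsm Esm] .
  have AA': "A \<subseteq> A'" unfolding A'_def L_def by blast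
  have zR: "\<forall>\<delta>\<in>A'. z \<delta> \<in> R"
  proof
    fix \<delta> assume d: "\<delta> \<in> A'"
    have "\<delta> \<in> Field r" using d A'sm by (auto simp: small_def)
    hence "y \<delta> \<in> R" using y by (auto simp: space_def)
    thus "z \<delta> \<in> R" using r0R r1R by (auto simp: z_def pat_def)
  qed
  have zA: "\<forall>\<delta>\<in>A. z \<delta> = y \<delta>" by (auto simp: z_def L_def)
  have disj: "cy A' z \<inter> NN g c d = {}"
  proof (rule ccontr)
    assume "cy A' z \<inter> NN g c d \<noteq> {}"
    then obtain f where f: "f \<in> cy A' z" "f \<in> NN g c d" by blast
    have fsp: "f \<in> space" using f(1) cy_space by blast
    have fz: "\<forall>\<delta>\<in>A'. f \<delta> = z \<delta>" using f(1) by (auto simp: cyl_def)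
    obtain \<beta> where \<beta>: "\<beta> \<in> underS r c" "|G g (dec \<beta> f)| \<le>o |underS r d|"
      "\<forall>c''\<in>C. \<forall>v. cosmall f \<beta> c'' v \<longrightarrow> v \<in> G g (dec \<beta> f)"
      using f(2) unfolding NN_def by blast
    have "\<forall>\<delta>\<in>Dom \<beta>. f \<delta> = y \<delta>"
    proof
      fix \<delta> assume "\<delta> \<in> Dom \<beta>"
      hence "\<delta> \<in> L" using \<beta>(1) by (auto simp: L_def P_def)
      thus "f \<delta> = y \<delta>" using fz by (auto simp: A'_def z_def)
    qed
    hence decq: "dec \<beta> f = dec \<beta> y" using dloc fsp y by blast
    have eb: "e \<beta> \<in> underS r c'" "e \<beta> \<notin> G g (dec \<beta> f)" using e[of \<beta>] \<beta>(2) decq by auto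
    let ?Er = "{p \<in> underS r c' \<times> underS r c'. f (hh (\<beta>, c', p)) \<noteq> pat (e \<beta>) (fst p)}"
    have sub: "?Er \<subseteq> {p \<in> underS r c' \<times> underS r c'. hh (\<beta>, c', p) \<in> L}"
    proof
      fix p assume p: "p \<in> ?Er"
      have pX: "(\<beta>, c', p) \<in> X" using p \<beta>(1) by (auto simp: X_def)
      show "p \<in> {p \<in> underS r c' \<times> underS r c'. hh (\<beta>, c', p) \<in> L}"
      proof (rule ccontr)
        assume "\<not> ?thesis"
        hence nL: "hh (\<beta>, c', p) \<notin> L" using p by blast
        have hE: "hh (\<beta>, c', p) \<in> E" using pX by (auto simp: E_def)
        have "HI (hh (\<beta>, c', p)) = (\<beta>, c', p)"
          unfolding HI_def using inv_into_f_f[OF hh(1)] pX XF by blast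
        hence "z (hh (\<beta>, c', p)) = pat (e \<beta>) (fst p)" using hE nL by (simp add: z_def)
        moreover have "f (hh (\<beta>, c', p)) = z (hh (\<beta>, c', p))" using fz hE by (auto simp: A'_def)
        ultimately show False using p by simp
      qed
    qed
    have "|{p \<in> underS r c' \<times> underS r c'. hh (\<beta>, c', p) \<in> L}| \<le>o |L|"
    proof -
      have "inj_on (\<lambda>p. hh (\<beta>, c', p)) {p \<in> underS r c' \<times> underS r c'. hh (\<beta>, c', p) \<in> L}"
      proof (rule inj_onI)
        fix p q assume p: "p \<in> {p \<in> underS r c' \<times> underS r c'. hh (\<beta>, c', p) \<in> L}"
          and q: "q \<in> {p \<in> underS r c' \<times> underS r c'. hh (\<beta>, c', p) \<in> L}"
          and eq: "hh (\<beta>, c', p) = hh (\<beta>, c', q)"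
        have "(\<beta>, c', p) \<in> X" "(\<beta>, c', q) \<in> X" using p q \<beta>(1) by (auto simp: X_def)
        hence "(\<beta>, c', p) = (\<beta>, c', q)" using inj_onD[OF hh(1) eq] XF by blast
        thus "p = q" by simp
      qed
      moreover have "(\<lambda>p. hh (\<beta>, c', p)) ` {p \<in> underS r c' \<times> underS r c'. hh (\<beta>, c', p) \<in> L} \<subseteq> L"
        by blast
      ultimately show ?thesis using card_of_ordLeq by blast
    qed
    hence "|?Er| \<le>o |L|" using card_of_mono1[OF sub] ordLeq_transitive by blast
    hence "|?Er| <o |underS r c'|" using Lc by (rule ordLeq_ordLess_trans)
    hence "cosmall f \<beta> c' (e \<beta>)" using eb(1) infc by (simp add: cosmall_def)
    hence "e \<beta> \<in> G g (dec \<beta> f)" using \<beta>(3) c'(1) by blast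
    thus False using eb(2) by blast
  qed
  show "\<exists>A' z. small A' \<and> A \<subseteq> A' \<and> (\<forall>\<delta>\<in>A'. z \<delta> \<in> R) \<and> (\<forall>\<delta>\<in>A. z \<delta> = y \<delta>) \<and> cy A' z \<inter> NN g c d = {}"
    using A'sm AA' zR zA disj by blast
qed

lemma C_inf: "\<not> finite C"
proof -
  have "|C| =o |Field k|" using C_props(3) ordIso_symmetric[OF card_of_Field_ordIso[OF kc]] ordIso_transitive by blast
  thus ?thesis using card_of_ordIso_finite kinf by blast
qed

lemma Mg_meagre: "(\<Union>((\<lambda>(c,d). NN g c d) ` (C \<times> C))) \<in> meagre_ideal k T"
proof -
  let ?F = "(\<lambda>(c,d). NN g c d) ` (C \<times> C)"
  have "|?F| \<le>o |C \<times> C|" by (rule card_of_image)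
  moreover have "|C \<times> C| =o |C|" using card_of_Times_same_infinite C_inf by blast
  ultimately have "|?F| \<le>o k" using C_props(3) ordLeq_ordIso_trans ordIso_transitive by blast
  moreover have "\<forall>M\<in>?F. nowhere_dense_in T M" using NN_nd by auto
  ultimately show ?thesis unfolding meagre_ideal_def by blast
qed

lemma main: "q_le_cof r N (meagre_ideal k T)"
  unfolding q_le_cof_def
proof (intro allI impI)
  fix F assume cF: "cofinal_family (meagre_ideal k T) F"
  have FI: "F \<subseteq> meagre_ideal k T" and cof: "\<forall>A\<in>meagre_ideal k T. \<exists>B\<in>F. A \<subseteq> B"
    using cF by (auto simp: cofinal_family_def)
  have "\<forall>n\<in>N. \<exists>q. fst q \<in> Field r \<and> small (fst (snd q)) \<and> (\<forall>\<delta>\<in>fst (snd q). snd (snd q) \<delta> \<in> R)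
      \<and> (\<forall>x\<in>cy (fst (snd q)) (snd (snd q)). dec (fst q) x = Phi n)"
    using dreal by fastforce
  then obtain qq where qq: "\<forall>n\<in>N. fst (qq n) \<in> Field r \<and> small (fst (snd (qq n))) \<and>
      (\<forall>\<delta>\<in>fst (snd (qq n)). snd (snd (qq n)) \<delta> \<in> R)
      \<and> (\<forall>x\<in>cy (fst (snd (qq n))) (snd (snd (qq n))). dec (fst (qq n)) x = Phi n)"
    by (rule bchoice[elim_format]) blast
  define aa where "aa n = fst (qq n)" for n
  define AA where "AA n = fst (snd (qq n))" for n
  define ss where "ss n = snd (snd (qq n))" for n
  have qn: "aa n \<in> Field r" "small (AA n)" "\<forall>\<delta>\<in>AA n. ss n \<delta> \<in> R" "\<forall>x\<in>cy (AA n) (ss n). dec (aa n) x = Phi n"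
    if "n \<in> N" for n
    using qq that unfolding aa_def AA_def ss_def by auto
  define pt where "pt B n = (SOME x. x \<in> cy (AA n) (ss n) \<and> x \<notin> B)" for B n
  have pt: "pt B n \<in> cy (AA n) (ss n) \<and> pt B n \<notin> B" if "B \<in> F" "n \<in> N" for B n
  proof -
    have "cond (AA n, ss n)" using qn[OF that(2)] by (simp add: cond_def)
    hence "\<exists>x\<in>cy (AA n) (ss n). x \<notin> B" using baire FI that(1) by blast
    hence "\<exists>x. x \<in> cy (AA n) (ss n) \<and> x \<notin> B" by blast
    thus ?thesis unfolding pt_def by (rule someI_ex)
  qed
  define fB where "fB B = restrict (\<lambda>n. {v. \<exists>c'\<in>C. cosmall (pt B n) (aa n) c' v}) N" for B
  have fBs: "fB B \<in> N \<rightarrow>\<^sub>E small_subsets r" for B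
  proof -
    have "{v. \<exists>c'\<in>C. cosmall (pt B n) (aa n) c' v} \<in> small_subsets r" for n
    proof -
      let ?S = "{v. \<exists>c'\<in>C. cosmall (pt B n) (aa n) c' v}"
      have "?S \<subseteq> (\<lambda>c'. THE v. cosmall (pt B n) (aa n) c' v) ` C"
      proof
        fix v assume "v \<in> ?S"
        then obtain c' where c': "c' \<in> C" "cosmall (pt B n) (aa n) c' v" by blast
        hence "(THE v. cosmall (pt B n) (aa n) c' v) = v"
          using cosmall_unique by blast
        thus "v \<in> (\<lambda>c'. THE v. cosmall (pt B n) (aa n) c' v) ` C" using c'(1) by force
      qed
      hence "|?S| \<le>o |C|" using card_of_mono1 card_of_image ordLeq_transitive by blast
      hence "|?S| <o r" using C_less by (rule ordLeq_ordLess_trans)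
      moreover have "?S \<subseteq> Field r" using underS_sub by (auto simp: cosmall_def)
      ultimately show ?thesis by (simp add: small_subsets_def)
    qed
    thus ?thesis by (simp add: fB_def)
  qed
  show "\<exists>Q. q_family r N Q \<and> |Q| \<le>o |F|"
  proof (intro exI conjI)
    show "|fB ` F| \<le>o |F|" by (rule card_of_image)
    show "q_family r N (fB ` F)"
      unfolding q_family_def
    proof (intro conjI ballI)
      show "fB ` F \<subseteq> N \<rightarrow>\<^sub>E small_subsets r" using fBs by blast
    next
      fix g assume g: "g \<in> N \<rightarrow>\<^sub>E small_subsets r"
      obtain B where B: "B \<in> F" "(\<Union>((\<lambda>(c,d). NN g c d) ` (C \<times> C))) \<subseteq> B"
        using cof Mg_meagre by blast
      have "\<forall>n\<in>N. \<not> fB B n \<subseteq> g n"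
      proof
        fix n assume n: "n \<in> N"
        let ?x = "pt B n"
        have x: "?x \<in> cy (AA n) (ss n)" "?x \<notin> B" using pt[OF B(1) n] by auto
        have xsp: "?x \<in> space" using x(1) cy_space by blast
        have dx: "dec (aa n) ?x = Phi n" using qn(4)[OF n] x(1) by blast
        have Gn: "G g (Phi n) = g n" using Phi_inj n by (simp add: G_def)
        obtain c where c: "c \<in> C" "aa n \<in> underS r c" using C_above qn(1)[OF n] by blast
        have gs: "|g n| <o r" using g n by (auto simp: small_subsets_def)
        obtain b where b: "b \<in> Field r" "|g n| <o |underS r b|" using lim[OF gs] by blast
        obtain d where d: "d \<in> C" "b \<in> underS r d" using C_above[OF b(1)] by blast
        have "|g n| \<le>o |underS r d|"
          using ordLess_imp_ordLeq[OF b(2)] card_of_mono1[OF underS_mono2[OF d(2)]] ordLeq_transitive by blast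
        hence Gle: "|G g (dec (aa n) ?x)| \<le>o |underS r d|" using dx Gn by simp
        have "?x \<notin> NN g c d" using B(2) x(2) c(1) d(1) by blast
        hence "\<not> (\<forall>c'\<in>C. \<forall>v. cosmall ?x (aa n) c' v \<longrightarrow> v \<in> G g (dec (aa n) ?x))"
          using xsp c(2) Gle unfolding NN_def by blast
        then obtain c' v where cv: "c' \<in> C" "cosmall ?x (aa n) c' v" "v \<notin> g n"
          using dx Gn by auto
        have "v \<in> fB B n" using cv n by (auto simp: fB_def)
        thus "\<not> fB B n \<subseteq> g n" using cv(3) by blast
      qed
      thus "\<exists>f\<in>fB ` F. \<forall>\<gamma>\<in>N. \<not> f \<gamma> \<subseteq> g \<gamma>" using B(1) by blast
    qed
  qed
qed

end

theorem mainTheorem19: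
  fixes k :: "'b rel" and r :: "'a rel" and N1 :: "'n set" and N2 :: "'m set"
  assumes "Card_order k" and "\<not> finite (Field k)" and "regularCard k"
    and "Card_order r" and "\<not> finite (Field r)" and "ordLess2 k r" and "cf_is r k"
  shows "(ordIso2 (card_of N1) (card_of (lt_pow r (Field r))) \<longrightarrow>
            q_le_cof r N1 (meagre_ideal k (box_top r (Field r))))
       \<and> (ordIso2 (card_of N2) (card_of (lt_pow r (Field k))) \<longrightarrow>
            q_le_cof r N2 (meagre_ideal k (box_top r (UNIV :: bool set))))"
proof -
  have S: "sing k r" using assms by (simp add: sing_def)
  interpret S: sing k r by (rule S)
  have "Field r \<noteq> {}" using assms(5) by auto
  then obtain r0 where r0: "r0 \<in> Field r" by blast
  have "Field r - {r0} \<noteq> {}"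
  proof
    assume "Field r - {r0} = {}"
    hence "Field r \<subseteq> {r0}" by blast
    thus False using assms(5) finite_subset by blast
  qed
  then obtain r1 where r1: "r1 \<in> Field r" "r1 \<noteq> r0" by blast
  have SR1: "singR k r (Field r) r0 r1"
    by (intro singR.intro S) (simp add: singR_axioms_def r0 r1 r1(2)[symmetric])
  have SR2: "singR k r (UNIV :: bool set) False True"
    by (intro singR.intro S) (simp add: singR_axioms_def)
  interpret R1: singR k r "Field r" r0 r1 by (rule SR1)
  interpret R2: singR k r "UNIV :: bool set" False True by (rule SR2)
  have P1: "q_le_cof r N1 (meagre_ideal k (box_top r (Field r)))"
    if iso1: "|N1| =o |lt_pow r (Field r)|"
  proof -
    have "\<exists>f. bij_betw f N1 (lt_pow r (Field r))" using iso1 by (simp only: card_of_ordIso[symmetric])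
    then obtain Phi where Phi: "bij_betw Phi N1 (lt_pow r (Field r))" by blast
    have "decs k r (Field r) r0 r1 N1 Phi (\<lambda>\<beta> x. restrict x (underS r \<beta>)) (\<lambda>\<beta>. underS r \<beta>)"
    proof (intro decs.intro[OF SR1] decs_axioms.intro)
      show "inj_on Phi N1" using Phi by (rule bij_betw_imp_inj_on)
    next
      fix c assume c: "c \<in> Field r"
      have "(\<Union>\<beta>\<in>underS r c. underS r \<beta>) \<subseteq> underS r c" using S.underS_mono2 by blast
      thus "R1.small (\<Union>\<beta>\<in>underS r c. underS r \<beta>)"
        by (rule R1.small_sub[OF R1.small_underS'[OF c]])
    next
      fix \<beta> x y assume "\<forall>\<delta>\<in>underS r \<beta>. x \<delta> = y \<delta>"
      thus "restrict x (underS r \<beta>) = restrict y (underS r \<beta>)" by (intro restrict_ext) auto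
    next
      fix n assume n: "n \<in> N1"
      have "Phi n \<in> lt_pow r (Field r)" using Phi n by (rule bij_betw_apply)
      hence "Phi n \<in> (\<Union>a\<in>Field r. underS r a \<rightarrow>\<^sub>E Field r)" by (simp add: lt_pow_def)
      then obtain a where a: "a \<in> Field r" "Phi n \<in> underS r a \<rightarrow>\<^sub>E Field r" by (rule UN_E)
      have sm: "R1.small (underS r a)" using R1.small_underS'[OF a(1)] .
      have vals: "\<forall>\<delta>\<in>underS r a. Phi n \<delta> \<in> Field r" using PiE_mem[OF a(2)] by blast
      have cyx: "\<forall>x\<in>R1.cy (underS r a) (Phi n). restrict x (underS r a) = Phi n"
      proof
        fix x assume "x \<in> R1.cy (underS r a) (Phi n)"
        hence xa: "\<forall>\<delta>\<in>underS r a. x \<delta> = Phi n \<delta>" by (simp add: cyl_def)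
        show "restrict x (underS r a) = Phi n"
        proof
          fix \<delta>
          show "restrict x (underS r a) \<delta> = Phi n \<delta>"
          proof (cases "\<delta> \<in> underS r a")
            case True thus ?thesis using xa by simp
          next
            case False thus ?thesis using PiE_arb[OF a(2) False] by simp
          qed
        qed
      qed
      show "\<exists>a\<in>Field r. \<exists>A s. R1.small A \<and> (\<forall>\<delta>\<in>A. s \<delta> \<in> Field r) \<and>
          (\<forall>x\<in>R1.cy A s. restrict x (underS r a) = Phi n)"
        apply (rule bexI[OF _ a(1)])
        apply (rule exI[of _ "underS r a"])
        apply (rule exI[of _ "Phi n"])
        using sm vals cyx by simp
    qed
    thus ?thesis by (rule decs.main)
  qed
  have P2: "q_le_cof r N2 (meagre_ideal k (box_top r (UNIV :: bool set)))"
    if iso2: "|N2| =o |lt_pow r (Field k)|"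
  proof -
    have "\<exists>f. bij_betw f N2 (lt_pow r (Field k))" using iso2 by (simp only: card_of_ordIso[symmetric])
    then obtain Phi where Phi: "bij_betw Phi N2 (lt_pow r (Field k))" by blast
    have kr': "|Field k| \<le>o |Field r|"
      using ordLess_imp_ordLeq[OF S.Fk_less] ordIso_symmetric[OF card_of_Field_ordIso[OF assms(4)]]
        ordLeq_ordIso_trans by blast
    have "Field k \<noteq> {}" using assms(2) by auto
    hence "|Field r \<times> Field k| =o |Field r|" using card_of_Times_infinite[OF assms(5) _ kr'] by blast
    hence "|Field r \<times> Field k| \<le>o |Field r|" by (rule ordIso_imp_ordLeq)
    hence "\<exists>p. inj_on p (Field r \<times> Field k) \<and> p ` (Field r \<times> Field k) \<subseteq> Field r"
      by (simp only: card_of_ordLeq[symmetric])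
    then obtain p where p: "inj_on p (Field r \<times> Field k)" "p ` (Field r \<times> Field k) \<subseteq> Field r" by blast
    define dec where "dec \<beta> x = (\<lambda>\<alpha>. if \<alpha> \<in> underS r \<beta> then (if \<exists>\<eta>\<in>Field k. x (p (\<alpha>,\<eta>))
        then SOME \<eta>. \<eta> \<in> Field k \<and> x (p (\<alpha>,\<eta>)) else undefined) else undefined)" for \<beta> and x :: "'a \<Rightarrow> bool"
    define Dm where "Dm \<beta> = p ` (underS r \<beta> \<times> Field k)" for \<beta>
    have Dm_small: "R2.small (Dm a)" if a: "a \<in> Field r" for a
    proof -
      have "|Dm a| \<le>o |underS r a \<times> Field k|" unfolding Dm_def by (rule card_of_image)
      moreover have "|underS r a \<times> Field k| <o r" by (rule S.times_less[OF S.small_underS[OF a] S.Fk_less])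
      ultimately have "|Dm a| <o r" by (rule ordLeq_ordLess_trans)
      moreover have "Dm a \<subseteq> Field r" unfolding Dm_def using p(2) S.underS_sub by blast
      ultimately show ?thesis by (simp add: R2.small_def)
    qed
    have "decs k r (UNIV :: bool set) False True N2 Phi dec Dm"
    proof (intro decs.intro[OF SR2] decs_axioms.intro)
      show "inj_on Phi N2" using Phi by (rule bij_betw_imp_inj_on)
    next
      fix c assume c: "c \<in> Field r"
      have "(\<Union>\<beta>\<in>underS r c. Dm \<beta>) \<subseteq> Dm c" unfolding Dm_def using S.underS_mono2 by blast
      thus "R2.small (\<Union>\<beta>\<in>underS r c. Dm \<beta>)" by (rule R2.small_sub[OF Dm_small[OF c]])
    next
      fix \<beta> and x y :: "'a \<Rightarrow> bool" assume xy: "\<forall>\<delta>\<in>Dm \<beta>. x \<delta> = y \<delta>"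
      show "dec \<beta> x = dec \<beta> y"
      proof
        fix \<alpha>
        show "dec \<beta> x \<alpha> = dec \<beta> y \<alpha>"
        proof (cases "\<alpha> \<in> underS r \<beta>")
          case True
          hence eq: "\<forall>\<eta>\<in>Field k. x (p (\<alpha>,\<eta>)) = y (p (\<alpha>,\<eta>))" using xy unfolding Dm_def by blast
          hence e1: "(\<exists>\<eta>\<in>Field k. x (p (\<alpha>,\<eta>))) = (\<exists>\<eta>\<in>Field k. y (p (\<alpha>,\<eta>)))" by blast
          have e2: "(\<lambda>\<eta>. \<eta> \<in> Field k \<and> x (p (\<alpha>,\<eta>))) = (\<lambda>\<eta>. \<eta> \<in> Field k \<and> y (p (\<alpha>,\<eta>)))"
            using eq by blast
          show ?thesis unfolding dec_def using e1 e2 by simp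
        next
          case False thus ?thesis by (simp add: dec_def)
        qed
      qed
    next
      fix n assume n: "n \<in> N2"
      have "Phi n \<in> lt_pow r (Field k)" using Phi n by (rule bij_betw_apply)
      hence "Phi n \<in> (\<Union>a\<in>Field r. underS r a \<rightarrow>\<^sub>E Field k)" by (simp add: lt_pow_def)
      then obtain a where a: "a \<in> Field r" "Phi n \<in> underS r a \<rightarrow>\<^sub>E Field k" by (rule UN_E)
      let ?X = "Field r \<times> Field k"
      define s where "s q = (Phi n (fst (inv_into ?X p q)) = snd (inv_into ?X p q))" for q
      have "\<forall>x\<in>R2.cy (Dm a) s. dec a x = Phi n"
      proof
        fix x assume x: "x \<in> R2.cy (Dm a) s"
        have xv: "x (p (\<alpha>,\<eta>)) = (Phi n \<alpha> = \<eta>)" if "\<alpha> \<in> underS r a" "\<eta> \<in> Field k" for \<alpha> \<eta>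
        proof -
          have m: "(\<alpha>,\<eta>) \<in> ?X" using that S.underS_sub by blast
          have "p (\<alpha>,\<eta>) \<in> Dm a" using that by (auto simp: Dm_def)
          hence "x (p (\<alpha>,\<eta>)) = s (p (\<alpha>,\<eta>))" using x by (auto simp: cyl_def)
          also have "\<dots> = (Phi n \<alpha> = \<eta>)" using inv_into_f_f[OF p(1) m] by (simp add: s_def)
          finally show ?thesis .
        qed
        show "dec a x = Phi n"
        proof
          fix \<alpha>
          show "dec a x \<alpha> = Phi n \<alpha>"
          proof (cases "\<alpha> \<in> underS r a")
            case True
            have pk: "Phi n \<alpha> \<in> Field k" using PiE_mem[OF a(2) True] .
            have ex: "\<exists>\<eta>\<in>Field k. x (p (\<alpha>,\<eta>))" using xv[OF True pk] pk by blast
            have "(SOME \<eta>. \<eta> \<in> Field k \<and> x (p (\<alpha>,\<eta>))) = Phi n \<alpha>"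
              by (rule some_equality) (use xv[OF True] pk in auto)
            thus ?thesis using True ex by (simp add: dec_def)
          next
            case False thus ?thesis using PiE_arb[OF a(2) False] by (simp add: dec_def)
          qed
        qed
      qed
      hence cyx: "\<forall>x\<in>R2.cy (Dm a) s. dec a x = Phi n" .
      show "\<exists>a\<in>Field r. \<exists>A s. R2.small A \<and> (\<forall>\<delta>\<in>A. s \<delta> \<in> (UNIV :: bool set)) \<and>
          (\<forall>x\<in>R2.cy A s. dec a x = Phi n)"
        apply (rule bexI[OF _ a(1)])
        apply (rule exI[of _ "Dm a"])
        apply (rule exI[of _ s])
        using Dm_small[OF a(1)] cyx by simp
    qed
    thus ?thesis by (rule decs.main)
  qed
  show ?thesis using P1 P2 by blast
qed

end
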